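(* For a $*$-ring $R$ the following are equivalent: (1) $R$ is $*$-clean and $0,1$ are its only projections; (2) $R$ is clean and $0,1$ are its only idempotents; (3) $R$ is a local ring.
   Context: A $*$-ring is a ring with identity with an involution $*$. A projection is $p$ with $p^2=p=p^*$. $R$ is clean if every element is a sum of an idempotent and a unit; $*$-clean if every element is a sum of a projection and a unit. *)

theory Defs
  imports Main
begin

definition star_ring :: "('a::ring_1 \<Rightarrow> 'a) \<Rightarrow> bool" where
  "star_ring st \<longleftrightarrow>
     (\<forall>x y. st (x + y) = st x + st y) \<and>
     (\<forall>x y. st (x * y) = st y * st x) \<and>
     (\<forall>x. st (st x) = x)"

definition idempotent :: "'a::ring_1 \<Rightarrow> bool" where
  "idempotent e \<longleftrightarrow> e * e = e"

definition projection :: "('a::ring_1 \<Rightarrow> 'a) \<Rightarrow> 'a \<Rightarrow> bool" where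
  "projection st p \<longleftrightarrow> p * p = p \<and> p = st p"

definition ring_unit :: "'a::ring_1 \<Rightarrow> bool" where
  "ring_unit u \<longleftrightarrow> (\<exists>v. u * v = 1 \<and> v * u = 1)"

definition clean_ring :: "'a::ring_1 itself \<Rightarrow> bool" where
  "clean_ring _ \<longleftrightarrow> (\<forall>x::'a. \<exists>e u. idempotent e \<and> ring_unit u \<and> x = e + u)"

definition star_clean_ring :: "('a::ring_1 \<Rightarrow> 'a) \<Rightarrow> bool" where
  "star_clean_ring st \<longleftrightarrow> (\<forall>x. \<exists>p u. projection st p \<and> ring_unit u \<and> x = p + u)"

definition left_ideal :: "'a::ring_1 set \<Rightarrow> bool" where
  "left_ideal I \<longleftrightarrow> 0 \<in> I \<and> (\<forall>x\<in>I. \<forall>y\<in>I. x - y \<in> I) \<and> (\<forall>r. \<forall>x\<in>I. r * x \<in> I)"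

definition maximal_left_ideal :: "'a::ring_1 set \<Rightarrow> bool" where
  "maximal_left_ideal M \<longleftrightarrow> left_ideal M \<and> M \<noteq> UNIV \<and>
     (\<forall>J. left_ideal J \<and> M \<subseteq> J \<and> J \<noteq> UNIV \<longrightarrow> J = M)"

definition local_ring :: "'a::ring_1 itself \<Rightarrow> bool" where
  "local_ring _ \<longleftrightarrow> (\<exists>!M::'a set. maximal_left_ideal M)"

end

theory Submission
  imports Defs
begin

lemma unit_neg: "ring_unit (x::'a::ring_1) \<Longrightarrow> ring_unit (-x)"
  unfolding ring_unit_def by (metis minus_mult_minus)

lemma P_idem:
  assumes P: "\<forall>x::'a::ring_1. ring_unit x \<or> ring_unit (1 - x)"
    and e: "e * e = (e::'a)"
  shows "e = 0 \<or> e = 1"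
proof (cases "ring_unit e")
  case True
  then obtain v where "v * e = 1" unfolding ring_unit_def by blast
  then have "v * (e * e) = v * e" using e by simp
  then have "(v*e)*e = v*e" by (simp add: mult.assoc)
  then show ?thesis using \<open>v*e=1\<close> by simp
next
  case False
  then obtain v where "v * (1 - e) = 1" using P unfolding ring_unit_def by blast
  have "(1 - e) * e = 0" using e by (simp add: algebra_simps)
  then have "v * ((1-e)*e) = 0" by simp
  then have "(v*(1-e))*e = 0" by (simp add: mult.assoc)
  then show ?thesis using \<open>v * (1 - e) = 1\<close> by simp
qed

lemma P_left_inv:
  assumes P: "\<forall>x::'a::ring_1. ring_unit x \<or> ring_unit (1 - x)"
    and ab: "a * b = (1::'a)"
  shows "b * a = 1"
proof -
  have "(b*a)*(b*a) = b*a" by (metis ab mult.assoc mult_1_left)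
  then have "b*a = 0 \<or> b*a = 1" using P_idem[OF P] by blast
  moreover have "b*a \<noteq> 0"
  proof
    assume "b*a = 0"
    have "1 = (a*b)*(a*b)" using ab by simp
    also have "\<dots> = a*(b*a)*b" by (simp add: mult.assoc)
    finally have "1 = a*(b*a)*b" .
    then show False using \<open>b*a=0\<close> by simp
  qed
  ultimately show ?thesis by blast
qed

lemma P_local:
  assumes P: "\<forall>x::'a::ring_1. ring_unit x \<or> ring_unit (1 - x)"
  shows "local_ring TYPE('a)"
proof -
  define N where "N = {x::'a. \<not> ring_unit x}"
  have linv: "ring_unit x" if "a * x = 1" for a x :: 'a
    using P_left_inv[OF P that] that unfolding ring_unit_def by blast
  have lm: "r * x \<in> N" if "x \<in> N" for r x
  proof (rule ccontr)
    assume "r * x \<notin> N"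
    then obtain w where "w * (r*x) = 1" unfolding N_def ring_unit_def by blast
    then have "(w*r)*x = 1" by (simp add: mult.assoc)
    then show False using linv that unfolding N_def by blast
  qed
  have sub: "x - y \<in> N" if "x \<in> N" "y \<in> N" for x y
  proof (rule ccontr)
    assume "x - y \<notin> N"
    then obtain w where w: "w * (x - y) = 1" unfolding N_def ring_unit_def by blast
    have "-(w*y) \<in> N" using lm[OF that(2), of "-w"] by simp
    then have "ring_unit (1 - (-(w*y)))" using P unfolding N_def by blast
    moreover have "1 - (-(w*y)) = w * x" using w by (simp add: algebra_simps)
    ultimately show False using lm[OF that(1), of w] unfolding N_def by simp
  qed
  have zN: "0 \<in> N" unfolding N_def ring_unit_def by simp
  have oN: "1 \<notin> N" unfolding N_def ring_unit_def by auto
  have liN: "left_ideal N" unfolding left_ideal_def using zN sub lm by blast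
  have proper: "J \<subseteq> N" if "left_ideal J" "J \<noteq> UNIV" for J
  proof
    fix x assume "x \<in> J"
    show "x \<in> N"
    proof (rule ccontr)
      assume "x \<notin> N"
      then obtain v where "v * x = 1" unfolding N_def ring_unit_def by blast
      then have "1 \<in> J" using \<open>x\<in>J\<close> that(1) unfolding left_ideal_def by (metis (no_types))
      then have "\<forall>r. r * 1 \<in> J" using that(1) unfolding left_ideal_def by blast
      then show False using that(2) by auto
    qed
  qed
  have mN: "maximal_left_ideal N"
    unfolding maximal_left_ideal_def using liN oN proper by blast
  show ?thesis unfolding local_ring_def
  proof (rule ex1I[of _ N])
    show "maximal_left_ideal N" by (rule mN)
  next
    fix M :: "'a set" assume "maximal_left_ideal M"
    then have "left_ideal M" "M \<noteq> UNIV" "\<And>J. left_ideal J \<Longrightarrow> M \<subseteq> J \<Longrightarrow> J \<noteq> UNIV \<Longrightarrow> J = M"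
      unfolding maximal_left_ideal_def by auto
    moreover have "N \<noteq> UNIV" using oN by auto
    ultimately show "M = N" using proper liN by metis
  qed
qed

lemma ideal_one: "left_ideal J \<Longrightarrow> 1 \<in> J \<Longrightarrow> J = (UNIV::'a::ring_1 set)"
proof -
  assume "left_ideal J" "1 \<in> J"
  then have "\<And>r. r * 1 \<in> J" unfolding left_ideal_def by blast
  then show ?thesis by auto
qed

lemma ideal_add: "left_ideal J \<Longrightarrow> x \<in> J \<Longrightarrow> y \<in> J \<Longrightarrow> x + (y::'a::ring_1) \<in> J"
proof -
  assume J: "left_ideal J" "x \<in> J" "y \<in> J"
  then have "0 - y \<in> J" unfolding left_ideal_def by blast
  then have "x - (0 - y) \<in> J" using J unfolding left_ideal_def by blast
  then show ?thesis by simp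
qed

lemma local_P:
  assumes L: "local_ring TYPE('a::ring_1)"
  shows "\<forall>x::'a. ring_unit x \<or> ring_unit (1 - x)"
proof -
  obtain M :: "'a set" where mM: "maximal_left_ideal M"
    and uM: "\<And>M'. maximal_left_ideal M' \<Longrightarrow> M' = M"
    using L unfolding local_ring_def by metis
  have liM: "left_ideal M" and nU: "M \<noteq> UNIV"
    using mM unfolding maximal_left_ideal_def by auto
  have oM: "1 \<notin> M" using ideal_one[OF liM] nU by blast
  have inM: "x \<in> M" if nl: "\<not> (\<exists>a. a * x = 1)" for x :: 'a
  proof -
    define A where "A = {J::'a set. left_ideal J \<and> range (\<lambda>r. r * x) \<subseteq> J \<and> 1 \<notin> J}"
    have I: "range (\<lambda>r. r * x) \<in> A"
    proof -
      have "0 \<in> range (\<lambda>r. r * x)" by (rule range_eqI[of _ _ 0]) simp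
      moreover have "u - v \<in> range (\<lambda>r. r * x)" if uv: "u \<in> range (\<lambda>r. r * x)" "v \<in> range (\<lambda>r. r * x)" for u v
      proof -
        obtain a b where "u = a * x" "v = b * x" using uv by blast
        then have "u - v = (a - b) * x" by (simp add: left_diff_distrib)
        then show ?thesis by blast
      qed
      moreover have "c * u \<in> range (\<lambda>r. r * x)" if uR: "u \<in> range (\<lambda>r. r * x)" for c u
      proof -
        obtain a where "u = a * x" using uR by blast
        then have "c * u = (c * a) * x" by (simp add: mult.assoc)
        then show ?thesis by blast
      qed
      moreover have "1 \<notin> range (\<lambda>r. r * x)" using nl by auto
      ultimately show ?thesis unfolding A_def left_ideal_def by blast
    qed
    have "\<exists>J\<in>A. \<forall>X\<in>A. J \<subseteq> X \<longrightarrow> X = J"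
    proof (rule subset_Zorn_nonempty)
      show "A \<noteq> {}" using I by blast
    next
      fix C assume C: "C \<noteq> {}" "subset.chain A C"
      then have CA: "C \<subseteq> A" and ch: "\<forall>X\<in>C. \<forall>Y\<in>C. X \<subseteq> Y \<or> Y \<subseteq> X"
        unfolding subset.chain_def by auto
      obtain J0 where J0: "J0 \<in> C" using C by blast
      have "left_ideal (\<Union>C)"
        unfolding left_ideal_def
      proof (intro conjI ballI allI)
        show "0 \<in> \<Union>C" using J0 CA unfolding A_def left_ideal_def by blast
      next
        fix u v assume "u \<in> \<Union>C" "v \<in> \<Union>C"
        then obtain X Y where "X \<in> C" "Y \<in> C" "u \<in> X" "v \<in> Y" by blast
        moreover have "left_ideal X" "left_ideal Y" using \<open>X\<in>C\<close> \<open>Y\<in>C\<close> CA unfolding A_def by auto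
        ultimately have "u - v \<in> X \<or> u - v \<in> Y" using ch unfolding left_ideal_def by blast
        then show "u - v \<in> \<Union>C" using \<open>X\<in>C\<close> \<open>Y\<in>C\<close> by blast
      next
        fix r u assume "u \<in> \<Union>C"
        then show "r * u \<in> \<Union>C" using CA unfolding A_def left_ideal_def by blast
      qed
      moreover have "range (\<lambda>r. r * x) \<subseteq> \<Union>C" using J0 CA unfolding A_def by blast
      moreover have "1 \<notin> \<Union>C" using CA unfolding A_def by blast
      ultimately show "\<Union>C \<in> A" unfolding A_def by blast
    qed
    then obtain J where JA: "J \<in> A" and Jm: "\<forall>X\<in>A. J \<subseteq> X \<longrightarrow> X = J" by blast
    have "maximal_left_ideal J"
      unfolding maximal_left_ideal_def
    proof (intro conjI allI impI)
      show "left_ideal J" using JA unfolding A_def by blast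
      show "J \<noteq> UNIV" using JA unfolding A_def by blast
    next
      fix K assume K: "left_ideal K \<and> J \<subseteq> K \<and> K \<noteq> UNIV"
      then have "1 \<notin> K" using ideal_one by blast
      then have "K \<in> A" using K JA unfolding A_def by blast
      then show "K = J" using Jm K by blast
    qed
    then have "J = M" by (rule uM)
    moreover have "1 * x \<in> J" using JA unfolding A_def by blast
    ultimately show ?thesis by simp
  qed
  have linvM: "a \<notin> M" if "a * y = 1" for a y :: 'a
  proof
    assume "a \<in> M"
    then have "y * a \<in> M" using liM unfolding left_ideal_def by blast
    have "1 - y*a \<notin> M"
    proof
      assume "1 - y*a \<in> M"
      then have "(y*a) + (1 - y*a) \<in> M" using liM \<open>y*a\<in>M\<close> ideal_add by blast
      then show False using oM by simp
    qed
    then obtain c where c: "c * (1 - y*a) = 1" using inM by blast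
    have "(1 - y*a) * y = 0" using that by (simp add: algebra_simps mult.assoc)
    then have "c * ((1 - y*a) * y) = 0" by simp
    then have "y = 0" using c by (simp add: mult.assoc[symmetric])
    then show False using that by simp
  qed
  have unit: "ring_unit y" if ex: "\<exists>a. a * y = 1" for y :: 'a
  proof -
    obtain a where a: "a * y = 1" using ex by blast
    then have "a \<notin> M" by (rule linvM)
    then obtain c where c: "c * a = 1" using inM by blast
    have "c = c * (a * y)" using a by simp
    also have "\<dots> = y" using c by (simp add: mult.assoc[symmetric])
    finally have "y * a = 1" using c by simp
    then show ?thesis using a unfolding ring_unit_def by blast
  qed
  show ?thesis
  proof
    fix x :: 'a
    show "ring_unit x \<or> ring_unit (1 - x)"
    proof (rule ccontr)
      assume "\<not> (ring_unit x \<or> ring_unit (1 - x))"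
      then have "x \<in> M" "1 - x \<in> M" using inM unit by blast+
      then have "(1 - x) + x \<in> M" using liM ideal_add by blast
      then show False using oM by simp
    qed
  qed
qed

lemma st01:
  assumes "star_ring st"
  shows "st 0 = 0" "st 1 = (1::'a::ring_1)"
proof -
  have "st (0+0) = st 0 + st 0" using assms unfolding star_ring_def by blast
  then show "st 0 = 0" by simp
  have "st (st 1 * 1) = st 1 * st (st 1)" using assms unfolding star_ring_def by blast
  then show "st 1 = 1" using assms unfolding star_ring_def by simp
qed

lemma P_clean:
  assumes P: "\<forall>x::'a::ring_1. ring_unit x \<or> ring_unit (1 - x)"
  shows "\<exists>e u. (e = 0 \<or> e = 1) \<and> ring_unit u \<and> (x::'a) = e + u"
proof (cases "ring_unit x")
  case True
  have "((0::'a) = 0 \<or> (0::'a) = 1) \<and> ring_unit x \<and> x = 0 + x" using True by simp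
  then show ?thesis by (rule exI[of _ 0, OF exI[of _ x]])
next
  case False
  then have "ring_unit (-(1 - x))" using P unit_neg by blast
  then have "((1::'a) = 0 \<or> (1::'a) = 1) \<and> ring_unit (-(1-x)) \<and> x = 1 + (-(1-x))" by simp
  then show ?thesis by (rule exI[of _ 1, OF exI[of _ "-(1-x)"]])
qed

lemma dec_P:
  assumes "\<forall>x::'a::ring_1. \<exists>e u. (e = 0 \<or> e = 1) \<and> ring_unit u \<and> x = e + u"
  shows "\<forall>x::'a. ring_unit x \<or> ring_unit (1 - x)"
proof
  fix x :: 'a
  obtain e u where "(e = 0 \<or> e = 1)" "ring_unit u" "x = e + u" using assms by blast
  then show "ring_unit x \<or> ring_unit (1 - x)"
    using unit_neg[of u] by (auto simp: algebra_simps)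
qed

theorem proposition2p6:
  fixes st :: "'a::ring_1 \<Rightarrow> 'a"
  assumes "star_ring st"
  shows "((star_clean_ring st \<and> (\<forall>p. projection st p \<longrightarrow> p = 0 \<or> p = 1))
           \<longleftrightarrow> (clean_ring TYPE('a) \<and> (\<forall>e::'a. idempotent e \<longrightarrow> e = 0 \<or> e = 1)))
       \<and> ((clean_ring TYPE('a) \<and> (\<forall>e::'a. idempotent e \<longrightarrow> e = 0 \<or> e = 1))
           \<longleftrightarrow> local_ring TYPE('a))"
proof -
  have s: "st 0 = 0" "st 1 = 1" using st01[OF assms] by auto
  have A: "(star_clean_ring st \<and> (\<forall>p. projection st p \<longrightarrow> p = 0 \<or> p = 1))
      \<longleftrightarrow> (\<forall>x::'a. ring_unit x \<or> ring_unit (1 - x))"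
  proof
    assume H: "star_clean_ring st \<and> (\<forall>p. projection st p \<longrightarrow> p = 0 \<or> p = 1)"
    show "\<forall>x::'a. ring_unit x \<or> ring_unit (1 - x)"
      using H unfolding star_clean_ring_def projection_def by (intro dec_P) blast
  next
    assume P: "\<forall>x::'a. ring_unit x \<or> ring_unit (1 - x)"
    have "star_clean_ring st" unfolding star_clean_ring_def projection_def
    proof
      fix x :: 'a
      obtain e u where "(e = 0 \<or> e = 1)" "ring_unit u" "x = e + u" using P_clean[OF P] by blast
      moreover have "e * e = e" "e = st e" using \<open>e = 0 \<or> e = 1\<close> s by auto
      ultimately show "\<exists>p u. (p * p = p \<and> p = st p) \<and> ring_unit u \<and> x = p + u"
        by blast
    qed
    moreover have "\<forall>p. projection st p \<longrightarrow> p = 0 \<or> p = 1"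
      using P_idem[OF P] unfolding projection_def by blast
    ultimately show "star_clean_ring st \<and> (\<forall>p. projection st p \<longrightarrow> p = 0 \<or> p = 1)" ..
  qed
  have B: "(clean_ring TYPE('a) \<and> (\<forall>e::'a. idempotent e \<longrightarrow> e = 0 \<or> e = 1))
      \<longleftrightarrow> (\<forall>x::'a. ring_unit x \<or> ring_unit (1 - x))"
  proof
    assume H: "clean_ring TYPE('a) \<and> (\<forall>e::'a. idempotent e \<longrightarrow> e = 0 \<or> e = 1)"
    show "\<forall>x::'a. ring_unit x \<or> ring_unit (1 - x)"
      using H unfolding clean_ring_def idempotent_def by (intro dec_P) blast
  next
    assume P: "\<forall>x::'a. ring_unit x \<or> ring_unit (1 - x)"
    have "clean_ring TYPE('a)" unfolding clean_ring_def idempotent_def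
    proof
      fix x :: 'a
      obtain e u where "(e = 0 \<or> e = 1)" "ring_unit u" "x = e + u" using P_clean[OF P] by blast
      moreover have "e * e = e" using \<open>e = 0 \<or> e = 1\<close> by auto
      ultimately show "\<exists>e u. e * e = e \<and> ring_unit u \<and> x = e + u" by blast
    qed
    moreover have "\<forall>e::'a. idempotent e \<longrightarrow> e = 0 \<or> e = 1"
      using P_idem[OF P] unfolding idempotent_def by blast
    ultimately show "clean_ring TYPE('a) \<and> (\<forall>e::'a. idempotent e \<longrightarrow> e = 0 \<or> e = 1)" ..
  qed
  have C: "local_ring TYPE('a) \<longleftrightarrow> (\<forall>x::'a. ring_unit x \<or> ring_unit (1 - x))"
    using P_local local_P by blast
  show ?thesis using A B C by blast
qed

end
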